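(* Let $G$ be a group, let $A=\bigoplus_{g\in G}A_g$ and $B=\bigoplus_{g\in G}B_g$ be $G$-graded rings, and let $\phi\colon A\to B$ be a surjective ring homomorphism with $\phi(A_g)\subseteq B_g$ for all $g\in G$. If $A$ is epsilon-strongly $G$-graded, then $B$ is epsilon-strongly $G$-graded.
   Context: Rings are associative, not necessarily unital; $XY$ denotes finite sums of products. A $G$-grading: $S=\bigoplus_gS_g$, $S_gS_h\subseteq S_{gh}$. The grading is epsilon-strong if $S_gS_{g^{-1}}S_g=S_g$ for all $g$ and each ring $S_gS_{g^{-1}}$ has a multiplicative identity element. *)

theory Defs
  imports "HOL-Algebra.Group"
begin

text \<open>Rings are the HOL type class ring: associative, not necessarily unital.
  The product XY of two subsets is the set of finite sums of products x*y.\<close>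

definition set_prod :: "'a::ring set \<Rightarrow> 'a set \<Rightarrow> 'a set" where
  "set_prod X Y = {sum_list (map (\<lambda>(x, y). x * y) ps) | ps. set ps \<subseteq> X \<times> Y}"

definition graded_ring :: "('g, 'm) monoid_scheme \<Rightarrow> ('g \<Rightarrow> 'a::ring set) \<Rightarrow> bool" where
  "graded_ring G S \<longleftrightarrow>
     (\<forall>g\<in>carrier G. 0 \<in> S g \<and> (\<forall>x\<in>S g. \<forall>y\<in>S g. x + y \<in> S g \<and> - x \<in> S g)) \<and>
     (\<forall>g\<in>carrier G. \<forall>h\<in>carrier G. \<forall>x\<in>S g. \<forall>y\<in>S h. x * y \<in> S (g \<otimes>\<^bsub>G\<^esub> h)) \<and>
     (\<forall>x::'a. \<exists>!f. finite {g. f g \<noteq> 0} \<and> (\<forall>g. g \<notin> carrier G \<longrightarrow> f g = 0) \<and>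
                   (\<forall>g\<in>carrier G. f g \<in> S g) \<and> x = sum f {g. f g \<noteq> 0})"

definition has_identity :: "'a::ring set \<Rightarrow> bool" where
  "has_identity R \<longleftrightarrow> (\<exists>e\<in>R. \<forall>x\<in>R. e * x = x \<and> x * e = x)"

definition epsilon_strong :: "('g, 'm) monoid_scheme \<Rightarrow> ('g \<Rightarrow> 'a::ring set) \<Rightarrow> bool" where
  "epsilon_strong G S \<longleftrightarrow>
     (\<forall>g\<in>carrier G.
        set_prod (set_prod (S g) (S (inv\<^bsub>G\<^esub> g))) (S g) = S g \<and>
        has_identity (set_prod (S g) (S (inv\<^bsub>G\<^esub> g))))"

definition ring_hom_nu :: "('a::ring \<Rightarrow> 'b::ring) \<Rightarrow> bool" where
  "ring_hom_nu \<phi> \<longleftrightarrow> (\<forall>x y. \<phi> (x + y) = \<phi> x + \<phi> y \<and> \<phi> (x * y) = \<phi> x * \<phi> y)"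

end

theory Submission
  imports Defs
begin

lemma hom_zero: assumes "ring_hom_nu \<phi>" shows "\<phi> 0 = 0"
proof -
  have "\<phi> (0 + 0) = \<phi> 0 + \<phi> 0" using assms unfolding ring_hom_nu_def by blast
  then show ?thesis by simp
qed

lemma hom_sum_list: assumes "ring_hom_nu \<phi>" shows "\<phi> (sum_list xs) = sum_list (map \<phi> xs)"
  using assms hom_zero[OF assms] by (induction xs) (auto simp: ring_hom_nu_def)

lemma hom_sum: assumes "ring_hom_nu \<phi>" shows "\<phi> (sum f A) = sum (\<phi> \<circ> f) A"
proof (induction A rule: infinite_finite_induct)
  case (infinite A) then show ?case using hom_zero[OF assms] by simp
next
  case empty then show ?case using hom_zero[OF assms] by simp
next
  case (insert x F) then show ?case using assms by (simp add: ring_hom_nu_def)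
qed

lemma hom_set_prod:
  assumes h: "ring_hom_nu \<phi>"
  shows "\<phi> ` set_prod X Y = set_prod (\<phi> ` X) (\<phi> ` Y)"
proof
  show "\<phi> ` set_prod X Y \<subseteq> set_prod (\<phi> ` X) (\<phi> ` Y)"
  proof
    fix z assume "z \<in> \<phi> ` set_prod X Y"
    then obtain ps where ps: "set ps \<subseteq> X \<times> Y" and z: "z = \<phi> (sum_list (map (\<lambda>(x, y). x * y) ps))"
      unfolding set_prod_def by blast
    define qs where "qs = map (\<lambda>(x,y). (\<phi> x, \<phi> y)) ps"
    have "z = sum_list (map (\<lambda>(x, y). x * y) qs)"
      unfolding z qs_def hom_sum_list[OF h] using h
      by (simp add: comp_def case_prod_unfold ring_hom_nu_def)
    moreover have "set qs \<subseteq> \<phi> ` X \<times> \<phi> ` Y" using ps unfolding qs_def by auto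
    ultimately show "z \<in> set_prod (\<phi> ` X) (\<phi> ` Y)" unfolding set_prod_def by blast
  qed
next
  show "set_prod (\<phi> ` X) (\<phi> ` Y) \<subseteq> \<phi> ` set_prod X Y"
  proof
    fix z assume "z \<in> set_prod (\<phi> ` X) (\<phi> ` Y)"
    then obtain qs where qs: "set qs \<subseteq> \<phi> ` X \<times> \<phi> ` Y" and z: "z = sum_list (map (\<lambda>(x, y). x * y) qs)"
      unfolding set_prod_def by blast
    have "\<forall>q\<in>set qs. \<exists>p. p \<in> X \<times> Y \<and> q = (\<phi> (fst p), \<phi> (snd p))"
    proof
      fix q assume "q \<in> set qs"
      then have q: "fst q \<in> \<phi> ` X" "snd q \<in> \<phi> ` Y" using qs by auto
      then obtain x y where "x \<in> X" "y \<in> Y" "fst q = \<phi> x" "snd q = \<phi> y" by blast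
      then show "\<exists>p. p \<in> X \<times> Y \<and> q = (\<phi> (fst p), \<phi> (snd p))"
        by (intro exI[of _ "(x, y)"]) (simp add: prod_eq_iff)
    qed
    then obtain L where L: "\<And>q. q \<in> set qs \<Longrightarrow> L q \<in> X \<times> Y \<and> q = (\<phi> (fst (L q)), \<phi> (snd (L q)))"
      by metis
    define ps where "ps = map L qs"
    have "set ps \<subseteq> X \<times> Y"
    proof
      fix p assume "p \<in> set ps"
      then obtain q where "q \<in> set qs" "p = L q" unfolding ps_def by auto
      then show "p \<in> X \<times> Y" using L by blast
    qed
    moreover have "\<phi> (sum_list (map (\<lambda>(x, y). x * y) ps)) = z"
    proof -
      have "map (\<phi> \<circ> (\<lambda>(x, y). x * y)) ps = map (\<lambda>(x, y). x * y) qs"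
        unfolding ps_def map_map
      proof (rule map_cong[OF refl])
        fix q assume q: "q \<in> set qs"
        have "(\<lambda>(x, y). x * y) q = \<phi> (fst (L q)) * \<phi> (snd (L q))"
          using L[OF q] by (metis case_prod_conv)
        also have "\<dots> = \<phi> (fst (L q) * snd (L q))" using h unfolding ring_hom_nu_def by simp
        finally show "((\<phi> \<circ> (\<lambda>(x, y). x * y)) \<circ> L) q = (\<lambda>(x, y). x * y) q"
          by (simp add: case_prod_unfold)
      qed
      then show ?thesis unfolding z hom_sum_list[OF h] by simp
    qed
    ultimately show "z \<in> \<phi> ` set_prod X Y" unfolding set_prod_def by blast
  qed
qed

lemma comp_surj:
  assumes GA: "graded_ring G SA" and GB: "graded_ring G SB" and h: "ring_hom_nu \<phi>"
    and su: "surj \<phi>" and sub: "\<forall>g\<in>carrier G. \<phi> ` SA g \<subseteq> SB g" and g: "g \<in> carrier G"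
  shows "\<phi> ` SA g = SB g"
proof
  show "\<phi> ` SA g \<subseteq> SB g" using sub g by blast
next
  show "SB g \<subseteq> \<phi> ` SA g"
  proof
    fix b assume b: "b \<in> SB g"
    obtain a where a: "b = \<phi> a" using su by (metis surjD)
    obtain f where f: "finite {h. f h \<noteq> 0}" "\<forall>h. h \<notin> carrier G \<longrightarrow> f h = 0"
      "\<forall>h\<in>carrier G. f h \<in> SA h" "a = sum f {h. f h \<noteq> 0}"
    proof -
      have "\<exists>!f. finite {h. f h \<noteq> 0} \<and> (\<forall>h. h \<notin> carrier G \<longrightarrow> f h = 0) \<and>
                   (\<forall>h\<in>carrier G. f h \<in> SA h) \<and> a = sum f {h. f h \<noteq> 0}"
        using spec[OF GA[unfolded graded_ring_def, THEN conjunct2, THEN conjunct2], of a] .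
      then have "\<exists>f. finite {h. f h \<noteq> 0} \<and> (\<forall>h. h \<notin> carrier G \<longrightarrow> f h = 0) \<and>
                   (\<forall>h\<in>carrier G. f h \<in> SA h) \<and> a = sum f {h. f h \<noteq> 0}"
        by (rule ex1_implies_ex)
      then show ?thesis using that by blast
    qed
    define P where "P = (\<lambda>F. finite {h. F h \<noteq> 0} \<and> (\<forall>h. h \<notin> carrier G \<longrightarrow> F h = 0) \<and>
                   (\<forall>h\<in>carrier G. F h \<in> SB h) \<and> b = sum F {h. F h \<noteq> 0})"
    have uniq: "\<exists>!F. P F" unfolding P_def
      using spec[OF GB[unfolded graded_ring_def, THEN conjunct2, THEN conjunct2], of b] .
    define D where "D = (\<lambda>h. if h = g then b else 0)"
    have PD: "P D"
    proof -
      have "{h. D h \<noteq> 0} \<subseteq> {g}" unfolding D_def by auto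
      moreover have "b = sum D {h. D h \<noteq> 0}"
        by (cases "b = 0") (auto simp: D_def)
      moreover have "\<forall>h\<in>carrier G. D h \<in> SB h" using GB b unfolding D_def graded_ring_def by auto
      ultimately show ?thesis unfolding P_def using g finite_subset by (auto simp: D_def)
    qed
    define F where "F = \<phi> \<circ> f"
    have PF: "P F"
    proof -
      have ss: "{h. F h \<noteq> 0} \<subseteq> {h. f h \<noteq> 0}" unfolding F_def using hom_zero[OF h] by auto
      have "b = sum F {h. f h \<noteq> 0}" using a f(4) hom_sum[OF h] F_def by simp
      also have "\<dots> = sum F {h. F h \<noteq> 0}"
        by (rule sum.mono_neutral_right[OF f(1) ss]) auto
      finally have "b = sum F {h. F h \<noteq> 0}" .
      moreover have "\<forall>h\<in>carrier G. F h \<in> SB h" using f(3) sub unfolding F_def by auto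
      ultimately show ?thesis unfolding P_def using finite_subset[OF ss f(1)] f(2) hom_zero[OF h]
        by (auto simp: F_def)
    qed
    have "F = D" using uniq PD PF by (metis ex1E)
    then have "\<phi> (f g) = b" unfolding F_def D_def by (metis comp_apply)
    moreover have "f g \<in> SA g" using f(3) g by blast
    ultimately show "b \<in> \<phi> ` SA g" by blast
  qed
qed

theorem lemma3p10:
  fixes G :: "('g, 'm) monoid_scheme"
    and SA :: "'g \<Rightarrow> 'a::ring set"
    and SB :: "'g \<Rightarrow> 'b::ring set"
    and \<phi> :: "'a \<Rightarrow> 'b"
  assumes "group G"
    and "graded_ring G SA"
    and "graded_ring G SB"
    and "ring_hom_nu \<phi>"
    and "surj \<phi>"
    and "\<forall>g\<in>carrier G. \<phi> ` SA g \<subseteq> SB g"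
    and "epsilon_strong G SA"
  shows "epsilon_strong G SB"
  unfolding epsilon_strong_def
proof
  fix g assume g: "g \<in> carrier G"
  have gi: "inv\<^bsub>G\<^esub> g \<in> carrier G" using assms(1) g by (simp add: group.inv_closed)
  have e1: "\<phi> ` SA g = SB g" using comp_surj[OF assms(2-6) g] .
  have e2: "\<phi> ` SA (inv\<^bsub>G\<^esub> g) = SB (inv\<^bsub>G\<^esub> g)" using comp_surj[OF assms(2-6) gi] .
  have A1: "set_prod (set_prod (SA g) (SA (inv\<^bsub>G\<^esub> g))) (SA g) = SA g"
    and A2: "has_identity (set_prod (SA g) (SA (inv\<^bsub>G\<^esub> g)))"
    using assms(7) g unfolding epsilon_strong_def by auto
  have R: "set_prod (SB g) (SB (inv\<^bsub>G\<^esub> g)) = \<phi> ` set_prod (SA g) (SA (inv\<^bsub>G\<^esub> g))"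
    unfolding e1[symmetric] e2[symmetric] by (rule hom_set_prod[OF assms(4), symmetric])
  have "set_prod (set_prod (SB g) (SB (inv\<^bsub>G\<^esub> g))) (SB g)
      = \<phi> ` set_prod (set_prod (SA g) (SA (inv\<^bsub>G\<^esub> g))) (SA g)"
  proof -
    have "set_prod (set_prod (SB g) (SB (inv\<^bsub>G\<^esub> g))) (SB g)
      = set_prod (\<phi> ` set_prod (SA g) (SA (inv\<^bsub>G\<^esub> g))) (\<phi> ` SA g)"
      by (simp only: R e1)
    also have "\<dots> = \<phi> ` set_prod (set_prod (SA g) (SA (inv\<^bsub>G\<^esub> g))) (SA g)"
      by (rule hom_set_prod[OF assms(4), symmetric])
    finally show ?thesis .
  qed
  then have "set_prod (set_prod (SB g) (SB (inv\<^bsub>G\<^esub> g))) (SB g) = SB g"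
    using A1 e1 by simp
  moreover have "has_identity (set_prod (SB g) (SB (inv\<^bsub>G\<^esub> g)))"
  proof -
    obtain e where e: "e \<in> set_prod (SA g) (SA (inv\<^bsub>G\<^esub> g))"
      "\<forall>x\<in>set_prod (SA g) (SA (inv\<^bsub>G\<^esub> g)). e * x = x \<and> x * e = x"
      using A2 unfolding has_identity_def by blast
    have m: "\<And>x y. \<phi> (x * y) = \<phi> x * \<phi> y" using assms(4) unfolding ring_hom_nu_def by blast
    show ?thesis unfolding R has_identity_def
    proof (rule bexI[of _ "\<phi> e"])
      show "\<phi> e \<in> \<phi> ` set_prod (SA g) (SA (inv\<^bsub>G\<^esub> g))" using e(1) by blast
      show "\<forall>x\<in>\<phi> ` set_prod (SA g) (SA (inv\<^bsub>G\<^esub> g)). \<phi> e * x = x \<and> x * \<phi> e = x"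
        using e(2) m[symmetric] by auto
    qed
  qed
  ultimately show "set_prod (set_prod (SB g) (SB (inv\<^bsub>G\<^esub> g))) (SB g) = SB g \<and>
        has_identity (set_prod (SB g) (SB (inv\<^bsub>G\<^esub> g)))" by blast
qed

end
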